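(* Let $\mathbb{D}^n$ be the unit polydisk in $\mathbb{C}^n$, let $\mu:\mathbb{D}^n\to(0,\infty)$ be a weight, let $\psi\in H(\mathbb{D}^n)$ and let $\varphi=(\varphi_1,\dots,\varphi_n)$ be a holomorphic self-map of $\mathbb{D}^n$. Let $W_{\psi,\varphi}f=\psi\,(f\circ\varphi)$. The following are equivalent: (a) $W_{\psi,\varphi}:\mathcal{B}(\mathbb{D}^n)\to H^\infty_\mu(\mathbb{D}^n)$ is bounded; (b) $W_{\psi,\varphi}:\mathcal{B}_{0*}(\mathbb{D}^n)\to H^\infty_\mu(\mathbb{D}^n)$ is bounded; (c) $\psi\in H^\infty_\mu(\mathbb{D}^n)$ and $$\vartheta_\mu(\psi,\varphi)=\sup_{z\in\mathbb{D}^n}\tfrac12\mu(z)|\psi(z)|\sum_{j=1}^n\log\frac{1+|\varphi_j(z)|}{1-|\varphi_j(z)|}$$ is finite.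
   Context: $H(\mathbb{D}^n)$ denotes holomorphic functions $\mathbb{D}^n\to\mathbb{C}$. A weight is a continuous strictly positive function $\mu$; $H^\infty_\mu(\mathbb{D}^n)=\{f\in H(\mathbb{D}^n):\|f\|_{H^\infty_\mu}=\sup_{z}\mu(z)|f(z)|<\infty\}$. The Bergman metric of $\mathbb{D}^n$ is $H_z(u,\bar v)=\sum_{j=1}^n\frac{u_j\bar v_j}{(1-|z_j|^2)^2}$. For $f\in H(\mathbb{D}^n)$, $Q_f(z)=\sup_{u\ne 0}\frac{|\sum_k \partial_k f(z)u_k|}{H_z(u,\bar u)^{1/2}}$, $\beta_f=\sup_z Q_f(z)$, $\mathcal{B}(\mathbb{D}^n)=\{f:\beta_f<\infty\}$ with norm $\|f\|_{\mathcal{B}}=|f(0)|+\beta_f$, and $\mathcal{B}_{0*}(\mathbb{D}^n)=\{f\in\mathcal{B}(\mathbb{D}^n):\lim_{z\to\partial^*\mathbb{D}^n}Q_f(z)=0\}$ with the same norm, where $\partial^*\mathbb{D}^n$ is the distinguished boundary (the torus $\{|z_1|=\dots=|z_n|=1\}$). *)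

theory Defs
  imports "HOL-Analysis.Analysis"
begin

definition polydisc :: "(complex ^ 'n::finite) set" where
  "polydisc = {z. \<forall>j. norm (z $ j) < 1}"

definition torus :: "(complex ^ 'n::finite) set" where
  "torus = {z. \<forall>j. norm (z $ j) = 1}"

definition cscale :: "complex \<Rightarrow> complex ^ 'n::finite \<Rightarrow> complex ^ 'n" where
  "cscale c v = (\<chi> j. c * v $ j)"

definition holo_on :: "(complex ^ 'n::finite \<Rightarrow> complex) \<Rightarrow> (complex ^ 'n) set \<Rightarrow> bool" where
  "holo_on f S \<longleftrightarrow> (\<forall>z\<in>S. \<exists>f'. (f has_derivative f') (at z) \<and>
                                 (\<forall>v. f' (cscale \<i> v) = \<i> * f' v))"

definition holo_self_map :: "(complex ^ 'n::finite \<Rightarrow> complex ^ 'n) \<Rightarrow> bool" where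
  "holo_self_map phi \<longleftrightarrow> (\<forall>j. holo_on (\<lambda>z. phi z $ j) polydisc) \<and> phi ` polydisc \<subseteq> polydisc"

definition weight :: "(complex ^ 'n::finite \<Rightarrow> real) \<Rightarrow> bool" where
  "weight mu \<longleftrightarrow> continuous_on polydisc mu \<and> (\<forall>z\<in>polydisc. mu z > 0)"

definition pderiv_c :: "(complex ^ 'n::finite \<Rightarrow> complex) \<Rightarrow> 'n \<Rightarrow> complex ^ 'n \<Rightarrow> complex" where
  "pderiv_c f k z = deriv (\<lambda>w. f (\<chi> j. if j = k then w else z $ j)) (z $ k)"

definition bergman :: "complex ^ 'n::finite \<Rightarrow> complex ^ 'n \<Rightarrow> real" where
  "bergman z u = (\<Sum>j\<in>UNIV. (norm (u $ j))\<^sup>2 / (1 - (norm (z $ j))\<^sup>2)\<^sup>2)"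

definition Qf :: "(complex ^ 'n::finite \<Rightarrow> complex) \<Rightarrow> complex ^ 'n \<Rightarrow> real" where
  "Qf f z = (SUP u\<in>{u. u \<noteq> 0}. norm (\<Sum>k\<in>UNIV. pderiv_c f k z * u $ k) / sqrt (bergman z u))"

definition bloch_seminorm :: "(complex ^ 'n::finite \<Rightarrow> complex) \<Rightarrow> real" where
  "bloch_seminorm f = (SUP z\<in>polydisc. Qf f z)"

definition bloch :: "(complex ^ 'n::finite \<Rightarrow> complex) set" where
  "bloch = {f. holo_on f polydisc \<and> bdd_above (Qf f ` polydisc)}"

definition bloch_norm :: "(complex ^ 'n::finite \<Rightarrow> complex) \<Rightarrow> real" where
  "bloch_norm f = norm (f 0) + bloch_seminorm f"

definition bloch0star :: "(complex ^ 'n::finite \<Rightarrow> complex) set" where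
  "bloch0star = {f \<in> bloch. \<forall>\<zeta>\<in>torus. ((Qf f) \<longlongrightarrow> 0) (at \<zeta> within polydisc)}"

definition Hmu :: "(complex ^ 'n::finite \<Rightarrow> real) \<Rightarrow> (complex ^ 'n \<Rightarrow> complex) set" where
  "Hmu mu = {f. holo_on f polydisc \<and> bdd_above ((\<lambda>z. mu z * norm (f z)) ` polydisc)}"

definition Hmu_norm :: "(complex ^ 'n::finite \<Rightarrow> real) \<Rightarrow> (complex ^ 'n \<Rightarrow> complex) \<Rightarrow> real" where
  "Hmu_norm mu f = (SUP z\<in>polydisc. mu z * norm (f z))"

definition wcomp :: "(complex ^ 'n::finite \<Rightarrow> complex) \<Rightarrow> (complex ^ 'n \<Rightarrow> complex ^ 'n)
                     \<Rightarrow> (complex ^ 'n \<Rightarrow> complex) \<Rightarrow> (complex ^ 'n \<Rightarrow> complex)" where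
  "wcomp psi phi f = (\<lambda>z. psi z * f (phi z))"

definition bounded_op :: "('a \<Rightarrow> 'b) \<Rightarrow> 'a set \<Rightarrow> ('a \<Rightarrow> real) \<Rightarrow> 'b set \<Rightarrow> ('b \<Rightarrow> real) \<Rightarrow> bool" where
  "bounded_op T X nX Y nY \<longleftrightarrow> (\<forall>x\<in>X. T x \<in> Y) \<and> (\<exists>C. \<forall>x\<in>X. nY (T x) \<le> C * nX x)"

definition theta_set :: "(complex ^ 'n::finite \<Rightarrow> real) \<Rightarrow> (complex ^ 'n \<Rightarrow> complex)
                         \<Rightarrow> (complex ^ 'n \<Rightarrow> complex ^ 'n) \<Rightarrow> real set" where
  "theta_set mu psi phi = (\<lambda>z. 1/2 * mu z * norm (psi z) *
      (\<Sum>j\<in>UNIV. ln ((1 + norm (phi z $ j)) / (1 - norm (phi z $ j))))) ` polydisc"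

end

theory Submission
  imports Defs
begin


lemma norm_axis_c: "norm (axis k x :: complex ^ 'n::finite) = norm x"
proof -
  have e: "(\<lambda>i. (norm (axis k x $ i))\<^sup>2) = (\<lambda>i. if i = k then (norm x)\<^sup>2 else 0)"
    by (auto simp: axis_def)
  show ?thesis unfolding norm_vec_def L2_set_def e by simp
qed

lemma bounded_linear_axis: "bounded_linear (axis k :: complex \<Rightarrow> complex ^ 'n::finite)"
proof (rule bounded_linear_intro[where K=1])
  show "axis k (x + y) = axis k x + axis k y" for x y :: complex by (auto simp add: axis_def vec_eq_iff)
  show "axis k (r *\<^sub>R x) = r *\<^sub>R axis k x" for r and x :: complex by (auto simp add: axis_def vec_eq_iff)
  show "norm (axis k x) \<le> norm x * 1" for x :: complex
    by (simp add: norm_axis_c)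
qed

lemma cscale_decomp: "cscale c v = Re c *\<^sub>R v + Im c *\<^sub>R cscale \<i> v"
  by (simp add: cscale_def vec_eq_iff complex_eq_iff)

lemma clinear_cscale:
  assumes "bounded_linear f'" "\<forall>v. f' (cscale \<i> v) = \<i> * f' v"
  shows "f' (cscale c v) = c * f' v"
proof -
  interpret bounded_linear f' by fact
  have "f' (cscale c v) = Re c *\<^sub>R f' v + Im c *\<^sub>R (\<i> * f' v)"
    using assms(2) by (subst cscale_decomp) (simp only: add scaleR)
  also have "\<dots> = c * f' v"
    by (simp add: scaleR_conv_of_real complex_eq_iff algebra_simps)
  finally show ?thesis .
qed

lemma vec_sum_axis: "(v :: complex ^ 'n::finite) = (\<Sum>k\<in>UNIV. cscale (v $ k) (axis k 1))"
proof -
  have "(\<Sum>k\<in>UNIV. cscale (v $ k) (axis k 1)) $ i = v $ i" for i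
  proof -
    have "(\<Sum>k\<in>UNIV. cscale (v $ k) (axis k 1)) $ i = (\<Sum>k\<in>UNIV. cscale (v $ k) (axis k 1) $ i)"
      by (rule sum_component)
    also have "\<dots> = (\<Sum>k\<in>UNIV. if k = i then v $ i else 0)"
      by (rule sum.cong) (auto simp: cscale_def axis_def)
    finally show ?thesis by simp
  qed
  then show ?thesis by (simp add: vec_eq_iff)
qed

lemma slice_eq: "(\<lambda>w. \<chi> j. if j = k then w else (z::complex^'n::finite) $ j) = (\<lambda>w. z + axis k (w - z $ k))"
  by (rule ext) (auto simp: vec_eq_iff axis_def)

lemma slice_deriv: "((\<lambda>w. \<chi> j. if j = k then w else (z::complex^'n::finite) $ j) has_derivative axis k) (at w0)"
proof -
  have "((\<lambda>w. z + axis k (w - z $ k)) has_derivative (\<lambda>h. 0 + axis k (h - 0))) (at w0)"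
    by (intro has_derivative_add has_derivative_const
        bounded_linear.has_derivative[OF bounded_linear_axis] has_derivative_diff has_derivative_ident)
  then show ?thesis unfolding slice_eq by simp
qed

lemma axis_cscale: "axis k h = cscale h (axis k (1::complex) :: complex^'n::finite)"
  by (auto simp: vec_eq_iff axis_def cscale_def)

lemma pderiv_eq:
  assumes "(f has_derivative f') (at z)" "\<forall>v. f' (cscale \<i> v) = \<i> * f' v"
  shows "pderiv_c f k z = f' (axis k 1)"
proof -
  have bl: "bounded_linear f'" using assms(1) by (rule has_derivative_bounded_linear)
  have sz: "(\<chi> j. if j = k then z $ k else z $ j) = z" by (auto simp: vec_eq_iff)
  have fd: "(f has_derivative f') (at ((\<lambda>w. \<chi> j. if j = k then w else z $ j) (z $ k)))"
    using assms(1) sz by simp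
  have "((\<lambda>w. f (\<chi> j. if j = k then w else z $ j)) has_derivative (f' \<circ> axis k)) (at (z $ k))"
    using has_derivative_compose[OF slice_deriv fd]
    by (simp add: o_def)
  moreover have "(f' \<circ> axis k) = (\<lambda>h. f' (axis k 1) * h)"
  proof (rule ext)
    fix h
    show "(f' \<circ> axis k) h = f' (axis k 1) * h"
      unfolding o_def by (subst axis_cscale) (simp add: clinear_cscale[OF bl assms(2)] mult.commute)
  qed
  ultimately have "((\<lambda>w. f (\<chi> j. if j = k then w else z $ j)) has_field_derivative f' (axis k 1)) (at (z $ k))"
    by (simp add: has_field_derivative_def)
  then show ?thesis unfolding pderiv_c_def by (rule DERIV_imp_deriv)
qed

lemma frechet_formula:
  assumes "(f has_derivative f') (at z)" "\<forall>v. f' (cscale \<i> v) = \<i> * f' v"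
  shows "f' v = (\<Sum>k\<in>UNIV. pderiv_c f k z * v $ k)"
proof -
  have bl: "bounded_linear f'" using assms(1) by (rule has_derivative_bounded_linear)
  interpret bounded_linear f' by (rule bl)
  have "f' v = f' (\<Sum>k\<in>UNIV. cscale (v $ k) (axis k 1))" by (subst vec_sum_axis[of v]) (rule refl)
  also have "\<dots> = (\<Sum>k\<in>UNIV. f' (cscale (v $ k) (axis k 1)))" by (rule sum)
  also have "\<dots> = (\<Sum>k\<in>UNIV. pderiv_c f k z * v $ k)"
    by (rule sum.cong) (auto simp: clinear_cscale[OF bl assms(2)] pderiv_eq[OF assms])
  finally show ?thesis .
qed

lemma bergman_term_le:
  assumes "z \<in> polydisc"
  shows "norm (u $ k) / (1 - (norm (z $ k))\<^sup>2) \<le> sqrt (bergman z u)"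
proof -
  have "norm (u $ k) / (1 - (norm (z $ k))\<^sup>2) = sqrt ((norm (u $ k))\<^sup>2 / (1 - (norm (z $ k))\<^sup>2)\<^sup>2)"
  proof -
    have "1 - (norm (z $ k))\<^sup>2 > 0" using assms by (auto simp: polydisc_def abs_square_less_1)
    then show ?thesis by (simp add: real_sqrt_divide)
  qed
  also have "\<dots> \<le> sqrt (bergman z u)" unfolding bergman_def
    by (intro real_sqrt_le_mono member_le_sum) auto
  finally show ?thesis .
qed

lemma bergman_pos:
  assumes "z \<in> polydisc" "u \<noteq> 0"
  shows "bergman z u > 0"
proof -
  obtain k where k: "u $ k \<noteq> 0" using assms(2) by (auto simp: vec_eq_iff)
  have "norm (z $ k) < 1" using assms(1) by (auto simp: polydisc_def)
  then have d: "1 - (norm (z $ k))\<^sup>2 > 0" by (simp add: abs_square_less_1)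
  have "0 < (norm (u $ k))\<^sup>2 / (1 - (norm (z $ k))\<^sup>2)\<^sup>2" using k d by simp
  also have "\<dots> \<le> bergman z u" unfolding bergman_def
    by (intro member_le_sum) auto
  finally show ?thesis .
qed

lemma qf_quot_bound:
  assumes "z \<in> polydisc" "u \<noteq> 0"
  shows "norm (\<Sum>k\<in>UNIV. a k * u $ k) / sqrt (bergman z u)
           \<le> (\<Sum>k\<in>UNIV. norm (a k) * (1 - (norm (z $ k))\<^sup>2))"
proof -
  define B where "B = sqrt (bergman z u)"
  have B: "B > 0" using bergman_pos[OF assms] by (simp add: B_def)
  have d: "1 - (norm (z $ k))\<^sup>2 > 0" for k
    using assms(1) by (auto simp: polydisc_def abs_square_less_1)
  have "norm (\<Sum>k\<in>UNIV. a k * u $ k) \<le> (\<Sum>k\<in>UNIV. norm (a k) * norm (u $ k))"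
    by (rule order_trans[OF norm_sum]) (simp add: norm_mult)
  also have "\<dots> \<le> (\<Sum>k\<in>UNIV. norm (a k) * (1 - (norm (z $ k))\<^sup>2) * B)"
  proof (rule sum_mono)
    fix k
    have "norm (u $ k) \<le> (1 - (norm (z $ k))\<^sup>2) * B"
      using bergman_term_le[OF assms(1), of u k] d[of k] unfolding B_def
      by (simp add: divide_le_eq mult.commute)
    then show "norm (a k) * norm (u $ k) \<le> norm (a k) * (1 - (norm (z $ k))\<^sup>2) * B"
      by (simp add: mult_left_mono mult.assoc)
  qed
  also have "\<dots> = (\<Sum>k\<in>UNIV. norm (a k) * (1 - (norm (z $ k))\<^sup>2)) * B"
    by (simp add: sum_distrib_right)
  finally show ?thesis using B unfolding B_def[symmetric] by (simp add: divide_le_eq)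
qed

lemma qf_set_bdd:
  assumes "z \<in> polydisc"
  shows "bdd_above ((\<lambda>u. norm (\<Sum>k\<in>UNIV. pderiv_c f k z * u $ k) / sqrt (bergman z u)) ` {u. u \<noteq> 0})"
  using qf_quot_bound[OF assms] by (intro bdd_aboveI2) auto

lemma qf_upper:
  assumes "z \<in> polydisc"
  shows "Qf f z \<le> (\<Sum>k\<in>UNIV. norm (pderiv_c f k z) * (1 - (norm (z $ k))\<^sup>2))"
proof -
  have ne: "{u::complex^'a. u \<noteq> 0} \<noteq> {}"
    by (auto intro!: exI[of _ "axis undefined 1"])
  show ?thesis unfolding Qf_def
    by (rule cSUP_least[OF ne]) (use qf_quot_bound[OF assms] in auto)
qed

lemma qf_lower:
  assumes "z \<in> polydisc" "u \<noteq> 0"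
  shows "norm (\<Sum>k\<in>UNIV. pderiv_c f k z * u $ k) / sqrt (bergman z u) \<le> Qf f z"
  unfolding Qf_def by (rule cSUP_upper[OF _ qf_set_bdd[OF assms(1)]]) (use assms in auto)

lemma qf_nonneg:
  assumes "z \<in> polydisc"
  shows "0 \<le> Qf f z"
proof -
  have "(axis undefined 1 :: complex^'a) \<noteq> 0" by simp
  have "0 \<le> norm (\<Sum>k\<in>UNIV. pderiv_c f k z * (axis undefined 1 :: complex^'a) $ k) / sqrt (bergman z (axis undefined 1))"
    using bergman_pos[OF assms \<open>axis undefined 1 \<noteq> 0\<close>] by (intro divide_nonneg_nonneg) auto
  also note qf_lower[OF assms \<open>axis undefined 1 \<noteq> 0\<close>, of f]
  finally show ?thesis .
qed



lemma zero_polydisc: "0 \<in> polydisc" by (simp add: polydisc_def)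

lemma scaled_polydisc:
  assumes "w \<in> polydisc" "\<bar>t\<bar> \<le> 1"
  shows "t *\<^sub>R w \<in> polydisc"
proof -
  have "norm (t *\<^sub>R w $ j) < 1" for j
  proof -
    have "norm (t *\<^sub>R w $ j) = \<bar>t\<bar> * norm (w $ j)" by simp
    also have "\<dots> \<le> norm (w $ j)" using assms(2) by (simp add: mult_left_le_one_le)
    also have "\<dots> < 1" using assms(1) by (simp add: polydisc_def)
    finally show ?thesis .
  qed
  then show ?thesis by (simp add: polydisc_def)
qed

lemma holo_deriv_D:
  assumes "holo_on f polydisc" "z \<in> polydisc"
  shows "(f has_derivative (\<lambda>v. \<Sum>k\<in>UNIV. pderiv_c f k z * v $ k)) (at z)"
proof -
  obtain f' where f': "(f has_derivative f') (at z)" "\<forall>v. f' (cscale \<i> v) = \<i> * f' v"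
    using assms unfolding holo_on_def by blast
  have "f' = (\<lambda>v. \<Sum>k\<in>UNIV. pderiv_c f k z * v $ k)"
    using frechet_formula[OF f'] by (rule ext)
  then show ?thesis using f'(1) by simp
qed

lemma bloch_Qf_le:
  assumes "f \<in> bloch" "z \<in> polydisc"
  shows "Qf f z \<le> bloch_seminorm f"
  unfolding bloch_seminorm_def
  by (rule cSUP_upper) (use assms in \<open>auto simp: bloch_def\<close>)

lemma bloch_seminorm_nonneg:
  assumes "f \<in> bloch"
  shows "0 \<le> bloch_seminorm f"
  using qf_nonneg[OF zero_polydisc, of f] bloch_Qf_le[OF assms zero_polydisc] by linarith

lemma sqrt_bergman_le:
  assumes "z \<in> polydisc"
  shows "sqrt (bergman z u) \<le> (\<Sum>k\<in>UNIV. norm (u $ k) / (1 - (norm (z $ k))\<^sup>2))"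
proof -
  have d: "1 - (norm (z $ k))\<^sup>2 > 0" for k
    using assms by (auto simp: polydisc_def abs_square_less_1)
  have "sqrt (bergman z u) = L2_set (\<lambda>k. norm (u $ k) / (1 - (norm (z $ k))\<^sup>2)) UNIV"
    unfolding bergman_def L2_set_def by (simp add: power_divide)
  also have "\<dots> \<le> (\<Sum>k\<in>UNIV. norm (u $ k) / (1 - (norm (z $ k))\<^sup>2))"
    by (rule L2_set_le_sum) (use d in \<open>auto intro: divide_nonneg_pos\<close>)
  finally show ?thesis .
qed

lemma growth:
  assumes f: "f \<in> bloch" and w: "w \<in> polydisc"
  shows "norm (f w - f 0) \<le> bloch_seminorm f * (\<Sum>k\<in>UNIV. artanh (norm (w $ k)))"
proof -
  define \<beta> where "\<beta> = bloch_seminorm f"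
  have \<beta>0: "0 \<le> \<beta>" using bloch_seminorm_nonneg[OF f] by (simp add: \<beta>_def)
  have hol: "holo_on f polydisc" using f by (simp add: bloch_def)
  define D where "D z v = (\<Sum>k\<in>UNIV. pderiv_c f k z * v $ k)" for z v
  have wk: "norm (w $ k) < 1" for k using w by (simp add: polydisc_def)
  have gd: "((\<lambda>t. f (t *\<^sub>R w)) has_vector_derivative D (t *\<^sub>R w) w) (at t)"
    if t: "t \<in> {0..1}" for t
  proof -
    have z: "t *\<^sub>R w \<in> polydisc" using scaled_polydisc[OF w] t by auto
    have fd: "(f has_derivative D (t *\<^sub>R w)) (at (t *\<^sub>R w))"
      using holo_deriv_D[OF hol z] unfolding D_def .
    have bl: "bounded_linear (D (t *\<^sub>R w))" using fd by (rule has_derivative_bounded_linear)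
    have ld: "((\<lambda>t. t *\<^sub>R w) has_derivative (\<lambda>s. s *\<^sub>R w)) (at t)"
      by (intro derivative_eq_intros) auto
    have "((\<lambda>t. f (t *\<^sub>R w)) has_derivative (\<lambda>s. D (t *\<^sub>R w) (s *\<^sub>R w))) (at t)"
      using has_derivative_compose[OF ld fd] .
    moreover have "(\<lambda>s. D (t *\<^sub>R w) (s *\<^sub>R w)) = (\<lambda>s. s *\<^sub>R D (t *\<^sub>R w) w)"
    proof (rule ext)
      fix s
      interpret bounded_linear "D (t *\<^sub>R w)" by (rule bl)
      show "D (t *\<^sub>R w) (s *\<^sub>R w) = s *\<^sub>R D (t *\<^sub>R w) w" by (rule scaleR)
    qed
    ultimately show ?thesis by (simp add: has_vector_derivative_def)
  qed
  define \<Phi> where "\<Phi> t = \<beta> * (\<Sum>k\<in>UNIV. artanh (t * norm (w $ k)))" for t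
  define \<Phi>' where "\<Phi>' t = \<beta> * (\<Sum>k\<in>UNIV. norm (w $ k) * (1 / (1 - (t * norm (w $ k))\<^sup>2)))" for t
  have pd: "(\<Phi> has_vector_derivative \<Phi>' t) (at t)" if t: "t \<in> {0..1}" for t
  proof -
    have a: "\<bar>t * norm (w $ k)\<bar> < 1" for k
    proof -
      have "\<bar>t * norm (w $ k)\<bar> = t * norm (w $ k)" using t by auto
      also have "\<dots> \<le> norm (w $ k)" using t by (simp add: mult_left_le_one_le)
      also have "\<dots> < 1" by (rule wk)
      finally show ?thesis .
    qed
    have "(\<Phi> has_real_derivative \<Phi>' t) (at t)"
      unfolding \<Phi>_def[abs_def] \<Phi>'_def
      apply (intro DERIV_cmult DERIV_sum)
      subgoal for k
      proof -
        have A: "(artanh has_real_derivative 1 / (1 - (t * norm (w $ k))\<^sup>2)) (at (t * norm (w $ k)))"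
          using artanh_real_has_field_derivative[OF a[of k], of UNIV] by simp
        have G: "((\<lambda>t. t * norm (w $ k)) has_real_derivative norm (w $ k)) (at t)"
          by (intro derivative_eq_intros) auto
        from DERIV_chain2[OF A G] show ?thesis by (simp add: mult.commute)
      qed
      done
    then show ?thesis by (simp add: has_real_derivative_iff_has_vector_derivative)
  qed
  have bnd: "norm (D (t *\<^sub>R w) w) \<le> \<Phi>' t" if t: "t \<in> {0..1}" for t
  proof -
    have z: "t *\<^sub>R w \<in> polydisc" using scaled_polydisc[OF w] t by auto
    have e: "norm ((t *\<^sub>R w) $ k) = t * norm (w $ k)" for k using t by auto
    have S: "sqrt (bergman (t *\<^sub>R w) w) \<le> (\<Sum>k\<in>UNIV. norm (w $ k) * (1 / (1 - (t * norm (w $ k))\<^sup>2)))"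
      using sqrt_bergman_le[OF z, of w] t by (simp add: e)
    show ?thesis
    proof (cases "w = 0")
      case True
      have "\<Phi>' t \<ge> 0" unfolding \<Phi>'_def True by simp
      then show ?thesis by (simp add: True D_def)
    next
      case False
      have bp: "sqrt (bergman (t *\<^sub>R w) w) > 0" using bergman_pos[OF z False] by simp
      have "norm (D (t *\<^sub>R w) w) / sqrt (bergman (t *\<^sub>R w) w) \<le> \<beta>"
        using qf_lower[OF z False, of f] bloch_Qf_le[OF f z] unfolding D_def \<beta>_def by linarith
      then have "norm (D (t *\<^sub>R w) w) \<le> \<beta> * sqrt (bergman (t *\<^sub>R w) w)"
        using bp by (simp add: divide_le_eq mult.commute)
      also have "\<dots> \<le> \<Phi>' t" unfolding \<Phi>'_def using S \<beta>0 by (rule mult_left_mono)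
      finally show ?thesis .
    qed
  qed
  have gc: "continuous_on {0..1} (\<lambda>t. f (t *\<^sub>R w))"
    by (intro continuous_at_imp_continuous_on ballI has_vector_derivative_continuous[OF gd])
  have pc: "continuous_on {0..1} \<Phi>"
    by (intro continuous_at_imp_continuous_on ballI has_vector_derivative_continuous[OF pd])
  have "norm (f (1 *\<^sub>R w) - f (0 *\<^sub>R w)) \<le> \<Phi> 1 - \<Phi> 0"
    by (rule differentiable_bound_general[OF zero_less_one gc pc, of "\<lambda>t. D (t *\<^sub>R w) w" \<Phi>'])
       (use gd pd bnd in auto)
  then show ?thesis by (simp add: \<Phi>_def \<beta>_def)
qed



lemma vec_sum_axis2: "(v :: complex ^ 'n::finite) = (\<Sum>k\<in>UNIV. axis k (v $ k))"
proof -
  have "(\<Sum>k\<in>UNIV. axis k (v $ k)) $ i = v $ i" for i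
  proof -
    have "(\<Sum>k\<in>UNIV. axis k (v $ k)) $ i = (\<Sum>k\<in>UNIV. axis k (v $ k) $ i)"
      by (rule sum_component)
    also have "\<dots> = (\<Sum>k\<in>UNIV. if k = i then v $ i else 0)"
      by (rule sum.cong) (auto simp: axis_def)
    finally show ?thesis by simp
  qed
  then show ?thesis by (simp add: vec_eq_iff)
qed

lemma has_derivative_vec_c:
  fixes F :: "'a::real_normed_vector \<Rightarrow> complex ^ 'n::finite"
  assumes "\<And>j. ((\<lambda>x. F x $ j) has_derivative D j) (at z)"
  shows "(F has_derivative (\<lambda>h. \<chi> j. D j h)) (at z)"
proof -
  have "((\<lambda>x. \<Sum>j\<in>UNIV. axis j (F x $ j)) has_derivative (\<lambda>h. \<Sum>j\<in>UNIV. axis j (D j h))) (at z)"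
    by (intro has_derivative_sum bounded_linear.has_derivative[OF bounded_linear_axis] assms)
  moreover have "(\<lambda>x. \<Sum>j\<in>UNIV. axis j (F x $ j)) = F"
    by (rule ext) (rule vec_sum_axis2[symmetric])
  moreover have "(\<lambda>h. \<Sum>j\<in>UNIV. axis j (D j h)) = (\<lambda>h. \<chi> j. D j h)"
  proof (rule ext)
    fix h
    show "(\<Sum>j\<in>UNIV. axis j (D j h)) = (\<chi> j. D j h)"
      using vec_sum_axis2[of "\<chi> j. D j h"] by simp
  qed
  ultimately show ?thesis by simp
qed

lemma holo_const: "holo_on (\<lambda>z. c) S"
  unfolding holo_on_def by (auto intro!: exI[of _ "\<lambda>h. 0"])

lemma holo_mult:
  assumes "holo_on f S" "holo_on g S"
  shows "holo_on (\<lambda>z. f z * g z) S"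
  unfolding holo_on_def
proof
  fix z assume z: "z \<in> S"
  obtain f' where f': "(f has_derivative f') (at z)" "\<forall>v. f' (cscale \<i> v) = \<i> * f' v"
    using assms(1) z unfolding holo_on_def by blast
  obtain g' where g': "(g has_derivative g') (at z)" "\<forall>v. g' (cscale \<i> v) = \<i> * g' v"
    using assms(2) z unfolding holo_on_def by blast
  show "\<exists>d. ((\<lambda>z. f z * g z) has_derivative d) (at z) \<and> (\<forall>v. d (cscale \<i> v) = \<i> * d v)"
    using has_derivative_mult[OF f'(1) g'(1)] f'(2) g'(2)
    by (intro exI[of _ "\<lambda>h. f z * g' h + f' h * g z"]) (auto simp: algebra_simps)
qed

lemma holo_sum:
  assumes "\<And>j. holo_on (F j) S"
  shows "holo_on (\<lambda>z. \<Sum>j\<in>(UNIV::'k::finite set). F j z) S"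
  unfolding holo_on_def
proof
  fix z assume z: "z \<in> S"
  have "\<forall>j. \<exists>d. (F j has_derivative d) (at z) \<and> (\<forall>v. d (cscale \<i> v) = \<i> * d v)"
    using assms z unfolding holo_on_def by blast
  then obtain D where D: "\<And>j. (F j has_derivative D j) (at z)" "\<And>j v. D j (cscale \<i> v) = \<i> * D j v"
    by metis
  show "\<exists>d. ((\<lambda>z. \<Sum>j\<in>UNIV. F j z) has_derivative d) (at z) \<and> (\<forall>v. d (cscale \<i> v) = \<i> * d v)"
    using has_derivative_sum[of UNIV F D, OF D(1)] D(2)
    by (intro exI[of _ "\<lambda>h. \<Sum>j\<in>UNIV. D j h"]) (auto simp: sum_distrib_left)
qed

lemma holo_comp:
  fixes phi :: "complex^'n::finite \<Rightarrow> complex^'n"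
  assumes phi: "holo_self_map phi" and f: "holo_on f polydisc"
  shows "holo_on (\<lambda>z. f (phi z)) polydisc"
  unfolding holo_on_def
proof
  fix z :: "complex^'n" assume z: "z \<in> polydisc"
  have "\<forall>j. \<exists>d. ((\<lambda>z. phi z $ j) has_derivative d) (at z) \<and> (\<forall>v. d (cscale \<i> v) = \<i> * d v)"
    using phi z unfolding holo_self_map_def holo_on_def by blast
  then obtain D where D: "\<And>j. ((\<lambda>z. phi z $ j) has_derivative D j) (at z)"
    "\<And>j v. D j (cscale \<i> v) = \<i> * D j v"
    by metis
  have pd: "(phi has_derivative (\<lambda>h. \<chi> j. D j h)) (at z)"
    by (rule has_derivative_vec_c) (rule D(1))
  have pz: "phi z \<in> polydisc" using phi z unfolding holo_self_map_def by blast
  obtain f' where f': "(f has_derivative f') (at (phi z))" "\<forall>v. f' (cscale \<i> v) = \<i> * f' v"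
    using f pz unfolding holo_on_def by blast
  have cs: "(\<chi> j. D j (cscale \<i> v)) = cscale \<i> (\<chi> j. D j v)" for v
    unfolding D(2) by (simp add: vec_eq_iff cscale_def)
  show "\<exists>d. ((\<lambda>z. f (phi z)) has_derivative d) (at z) \<and> (\<forall>v. d (cscale \<i> v) = \<i> * d v)"
    using has_derivative_compose[OF pd f'(1)] f'(2)
    by (intro exI[of _ "\<lambda>h. f' (\<chi> j. D j h)"]) (auto simp: cs)
qed

lemma holo_coord:
  assumes "\<And>z. z \<in> S \<Longrightarrow> (g has_field_derivative g' (z $ j)) (at (z $ j))"
  shows "holo_on (\<lambda>z. g (z $ j)) S"
  unfolding holo_on_def
proof
  fix z assume z: "z \<in> S"
  have c: "((\<lambda>z. z $ j) has_derivative (\<lambda>h. h $ j)) (at z)"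
    by (rule bounded_linear.has_derivative[OF bounded_linear_vec_nth has_derivative_ident])
  have gd: "(g has_derivative (\<lambda>h. g' (z $ j) * h)) (at (z $ j))"
    using assms[OF z] by (simp add: has_field_derivative_def)
  show "\<exists>d. ((\<lambda>z. g (z $ j)) has_derivative d) (at z) \<and> (\<forall>v. d (cscale \<i> v) = \<i> * d v)"
    using has_derivative_compose[OF c gd]
    by (intro exI[of _ "\<lambda>h. g' (z $ j) * h $ j"]) (auto simp: cscale_def)
qed



lemma const_Qf: "Qf (\<lambda>z. c) z = 0"
proof -
  have "pderiv_c (\<lambda>z. c) k z = 0" for k by (simp add: pderiv_c_def)
  then have "Qf (\<lambda>z. c) z = (SUP u\<in>{u::complex^'a. u \<noteq> 0}. (0::real))" unfolding Qf_def by simp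
  also have "\<dots> = 0"
    by (rule cSUP_const) (auto intro!: exI[of _ "axis undefined 1"])
  finally show ?thesis .
qed

lemma const_bloch0star: "(\<lambda>z::complex^'n::finite. c) \<in> bloch0star"
proof -
  have q: "Qf (\<lambda>z::complex^'n. c) = (\<lambda>z. 0)" by (rule ext) (rule const_Qf)
  have "bdd_above (Qf (\<lambda>z::complex^'n. c) ` polydisc)" unfolding q by (rule bdd_aboveI[of _ 0]) auto
  moreover have "(Qf (\<lambda>z::complex^'n. c) \<longlongrightarrow> 0) (at \<zeta> within polydisc)" for \<zeta> unfolding q by simp
  ultimately show ?thesis unfolding bloch0star_def bloch_def by (simp add: holo_const)
qed

lemma const_bloch_norm: "bloch_norm (\<lambda>z. c) = norm c"
  unfolding bloch_norm_def bloch_seminorm_def const_Qf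
  using zero_polydisc by (subst cSUP_const) auto

definition tf :: "complex^'n::finite \<Rightarrow> complex^'n \<Rightarrow> complex" where
  "tf c = (\<lambda>z. \<Sum>j\<in>UNIV. - ln (1 - c $ j * z $ j))"

lemma norm_one_minus_ge:
  fixes a b :: complex
  assumes "norm a \<le> 1" "norm b \<le> 1"
  shows "1 - norm a * norm b \<le> norm (1 - a * b)"
proof -
  have "1 - norm a * norm b = norm (1::complex) - norm (a * b)" by (simp add: norm_mult)
  also have "\<dots> \<le> norm (1 - a * b)" by (rule norm_triangle_ineq2)
  finally show ?thesis .
qed

lemma log_term_deriv:
  fixes a w :: complex
  assumes "norm a < 1" "norm w < 1"
  shows "((\<lambda>w. - ln (1 - a * w)) has_field_derivative a / (1 - a * w)) (at w)"
proof -
  have "Re (a * w) \<le> norm (a * w)" by (rule complex_Re_le_cmod)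
  also have "\<dots> = norm a * norm w" by (simp add: norm_mult)
  also have "\<dots> < 1" using assms by (metis mult_le_one norm_ge_zero order.strict_implies_order order_le_less_trans mult_strict_mono' one_le_numeral mult_less_cancel_left1 less_eq_real_def mult_left_le_one_le)
  finally have "Re (1 - a * w) > 0" by simp
  then have nr: "1 - a * w \<notin> \<real>\<^sub>\<le>\<^sub>0" by (auto simp: complex_nonpos_Reals_iff)
  have nz: "1 - a * w \<noteq> 0" using nr by auto
  have i: "((\<lambda>w. 1 - a * w) has_field_derivative - a) (at w)"
    by (rule DERIV_cong[OF DERIV_diff[OF DERIV_const DERIV_cmult[OF DERIV_ident]]]) simp
  have "((\<lambda>w. - ln (1 - a * w)) has_field_derivative - (inverse (1 - a * w) * - a)) (at w)"
    by (rule DERIV_minus, rule DERIV_chain2[OF has_field_derivative_Ln[OF nr] i])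
  then show ?thesis by (rule DERIV_cong) (use nz in \<open>simp add: field_simps\<close>)
qed



lemma pd_norm: "z \<in> polydisc \<Longrightarrow> norm (z $ j) < 1" by (simp add: polydisc_def)

lemma tf_deriv:
  assumes c: "c \<in> polydisc" and z: "z \<in> polydisc"
  shows "(tf c has_derivative (\<lambda>h. \<Sum>j\<in>UNIV. (c $ j / (1 - c $ j * z $ j)) * h $ j)) (at z)"
  unfolding tf_def
proof (rule has_derivative_sum)
  fix j
  have v: "((\<lambda>z. z $ j) has_derivative (\<lambda>h. h $ j)) (at z)"
    by (rule bounded_linear.has_derivative[OF bounded_linear_vec_nth has_derivative_ident])
  have g: "((\<lambda>w. - ln (1 - c $ j * w)) has_derivative (\<lambda>h. (c $ j / (1 - c $ j * z $ j)) * h)) (at (z $ j))"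
    using log_term_deriv[OF pd_norm[OF c, of j] pd_norm[OF z, of j]] unfolding has_field_derivative_def
    by (rule has_derivative_eq_rhs) (simp add: fun_eq_iff)
  show "((\<lambda>x. - ln (1 - c $ j * x $ j)) has_derivative (\<lambda>h. c $ j / (1 - c $ j * z $ j) * h $ j)) (at z)"
    using has_derivative_compose[OF v g] .
qed

lemma tf_clin: "(\<lambda>h. \<Sum>j\<in>UNIV. (a j) * h $ j) (cscale \<i> v) = \<i> * (\<lambda>h. \<Sum>j\<in>UNIV. (a j) * h $ j) v"
  by (simp add: cscale_def sum_distrib_left algebra_simps)

lemma tf_holo:
  fixes c :: "complex^'n::finite"
  assumes c: "c \<in> polydisc"
  shows "holo_on (tf c) polydisc"
  unfolding holo_on_def
proof
  fix z :: "complex^'n" assume z: "z \<in> polydisc"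
  show "\<exists>f'. (tf c has_derivative f') (at z) \<and> (\<forall>v. f' (cscale \<i> v) = \<i> * f' v)"
    by (rule exI[of _ "\<lambda>h. \<Sum>j\<in>UNIV. (c $ j / (1 - c $ j * z $ j)) * h $ j"])
       (intro conjI allI tf_deriv[OF c z], simp add: cscale_def sum_distrib_left algebra_simps)
qed

lemma tf_pderiv:
  assumes c: "c \<in> polydisc" and z: "z \<in> polydisc"
  shows "pderiv_c (tf c) k z = c $ k / (1 - c $ k * z $ k)"
proof -
  have cl: "\<forall>v. (\<lambda>h. \<Sum>j\<in>UNIV. (c $ j / (1 - c $ j * z $ j)) * h $ j) (cscale \<i> v)
     = \<i> * (\<lambda>h. \<Sum>j\<in>UNIV. (c $ j / (1 - c $ j * z $ j)) * h $ j) v"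
    by (simp add: cscale_def sum_distrib_left algebra_simps)
  have "pderiv_c (tf c) k z = (\<lambda>h. \<Sum>j\<in>UNIV. (c $ j / (1 - c $ j * z $ j)) * h $ j) (axis k 1)"
    by (rule pderiv_eq[OF tf_deriv[OF c z] cl])
  also have "\<dots> = (\<Sum>j\<in>UNIV. if j = k then c $ k / (1 - c $ k * z $ k) else 0)"
    by (rule sum.cong) (auto simp: axis_def)
  finally show ?thesis by simp
qed

lemma term_bounds:
  fixes a w :: complex
  assumes "norm a < 1" "norm w < 1"
  shows "norm (a / (1 - a * w)) * (1 - (norm w)\<^sup>2) \<le> (1 - (norm w)\<^sup>2) / (1 - norm a)"
    and "norm (a / (1 - a * w)) * (1 - (norm w)\<^sup>2) \<le> 2"
proof -
  define m where "m = 1 - norm a * norm w"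
  have m: "m \<le> norm (1 - a * w)" unfolding m_def
    by (rule norm_one_minus_ge) (use assms in auto)
  have "norm a * norm w \<le> norm a" by (rule mult_left_le) (use assms in auto)
  then have m1: "1 - norm a \<le> m" unfolding m_def by simp
  have "norm a * norm w \<le> norm w" by (rule mult_left_le_one_le) (use assms in auto)
  then have m2: "1 - norm w \<le> m" unfolding m_def by simp
  have pa: "1 - norm a > 0" "1 - norm w > 0" using assms by auto
  have pw: "1 - (norm w)\<^sup>2 \<ge> 0" using assms by (simp add: abs_square_le_1)
  have nd: "norm (a / (1 - a * w)) \<le> 1 / m"
  proof -
    have "norm (a / (1 - a * w)) = norm a / norm (1 - a * w)" by (simp add: norm_divide)
    also have "\<dots> \<le> 1 / norm (1 - a * w)" using assms by (intro divide_right_mono) auto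
    also have "\<dots> \<le> 1 / m"
    proof -
      have mp: "m > 0" using m1 pa by linarith
      then have "norm (1 - a * w) > 0" using m by linarith
      then show ?thesis using m mp by (intro divide_left_mono) auto
    qed
    finally show ?thesis .
  qed
  have "norm (a / (1 - a * w)) * (1 - (norm w)\<^sup>2) \<le> (1 / m) * (1 - (norm w)\<^sup>2)"
    using nd pw by (rule mult_right_mono)
  also have "\<dots> \<le> (1 / (1 - norm a)) * (1 - (norm w)\<^sup>2)"
    using m1 pa pw by (intro mult_right_mono divide_left_mono) auto
  finally show "norm (a / (1 - a * w)) * (1 - (norm w)\<^sup>2) \<le> (1 - (norm w)\<^sup>2) / (1 - norm a)" by simp
  have "(1 / m) * (1 - (norm w)\<^sup>2) \<le> (1 / (1 - norm w)) * (1 - (norm w)\<^sup>2)"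
    using m2 pa pw by (intro mult_right_mono divide_left_mono) auto
  also have "\<dots> = 1 + norm w" using pa by (simp add: field_simps power2_eq_square)
  also have "\<dots> \<le> 2" using assms by simp
  finally show "norm (a / (1 - a * w)) * (1 - (norm w)\<^sup>2) \<le> 2"
    using \<open>norm (a / (1 - a * w)) * (1 - (norm w)\<^sup>2) \<le> (1 / m) * (1 - (norm w)\<^sup>2)\<close> by linarith
qed

lemma tf_Qf_le1:
  assumes c: "c \<in> polydisc" and z: "z \<in> polydisc"
  shows "Qf (tf c) z \<le> (\<Sum>k\<in>UNIV. (1 - (norm (z $ k))\<^sup>2) / (1 - norm (c $ k)))"
  using qf_upper[OF z, of "tf c"]
  by (rule order_trans) (auto intro!: sum_mono simp: tf_pderiv[OF c z] term_bounds(1)[OF pd_norm[OF c] pd_norm[OF z]])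

lemma tf_Qf_le2:
  fixes c :: "complex^'a::finite"
  assumes c: "c \<in> polydisc" and z: "z \<in> polydisc"
  shows "Qf (tf c) z \<le> 2 * real CARD('a::finite)"
proof -
  have "(\<Sum>k\<in>UNIV. norm (pderiv_c (tf c) k z) * (1 - (norm (z $ k))\<^sup>2)) \<le> (\<Sum>k\<in>(UNIV::'a set). 2)"
    by (rule sum_mono) (simp add: tf_pderiv[OF c z] term_bounds(2)[OF pd_norm[OF c] pd_norm[OF z]])
  then have "Qf (tf c) z \<le> (\<Sum>k\<in>(UNIV::'a set). 2)"
    using qf_upper[OF z, of "tf c"] by linarith
  then show ?thesis by simp
qed

lemma tf_bloch:
  fixes c :: "complex^'n::finite"
  assumes c: "c \<in> polydisc" shows "tf c \<in> bloch"
  unfolding bloch_def using tf_holo[OF c] tf_Qf_le2[OF c]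
  by (auto intro: bdd_aboveI[of _ "2 * real CARD('n)"])

lemma tf_bloch0star:
  fixes c :: "complex^'a::finite"
  assumes c: "c \<in> polydisc"
  shows "tf c \<in> bloch0star"
  unfolding bloch0star_def
proof (intro CollectI conjI ballI tf_bloch[OF c])
  fix \<zeta> :: "complex^'a" assume t: "\<zeta> \<in> torus"
  define B where "B z = (\<Sum>k\<in>UNIV. (1 - (norm (z $ k))\<^sup>2) / (1 - norm (c $ k)))" for z :: "complex^'a"
  have "(B \<longlongrightarrow> B \<zeta>) (at \<zeta> within polydisc)"
  proof -
    have "norm (c $ k) < 1" for k by (rule pd_norm[OF c])
    then have "1 - norm (c $ k) \<noteq> 0" for k by (metis less_irrefl right_minus_eq)
    then show ?thesis unfolding B_def by (intro tendsto_intros) auto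
  qed
  moreover have "B \<zeta> = 0" using t by (simp add: B_def torus_def)
  ultimately have B0: "(B \<longlongrightarrow> 0) (at \<zeta> within polydisc)" by simp
  show "(Qf (tf c) \<longlongrightarrow> 0) (at \<zeta> within polydisc)"
  proof (rule tendsto_sandwich[OF _ _ tendsto_const B0])
    show "\<forall>\<^sub>F z in at \<zeta> within polydisc. 0 \<le> Qf (tf c) z"
      unfolding eventually_at_filter by (rule always_eventually) (auto intro: qf_nonneg)
    show "\<forall>\<^sub>F z in at \<zeta> within polydisc. Qf (tf c) z \<le> B z"
      unfolding eventually_at_filter by (rule always_eventually) (auto simp: B_def intro: tf_Qf_le1[OF c])
  qed
qed

lemma tf_zero: "tf c 0 = 0" by (simp add: tf_def)

lemma tf_bloch_norm:
  fixes c :: "complex^'a::finite"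
  assumes c: "c \<in> polydisc"
  shows "bloch_norm (tf c) \<le> 2 * real CARD('a)"
proof -
  have "bloch_seminorm (tf c) \<le> 2 * real CARD('a)"
    unfolding bloch_seminorm_def
    by (rule cSUP_least) (use zero_polydisc tf_Qf_le2[OF c] in auto)
  then show ?thesis by (simp add: bloch_norm_def tf_zero)
qed

lemma tf_value:
  assumes w: "w \<in> polydisc"
  shows "norm (tf (\<chi> j. cnj (w $ j)) w) = (\<Sum>j\<in>UNIV. - ln (1 - (norm (w $ j))\<^sup>2))"
proof -
  have p: "1 - (norm (w $ j))\<^sup>2 > 0" for j using pd_norm[OF w] by (simp add: abs_square_less_1)
  have e: "- ln (1 - cnj (w $ j) * w $ j) = complex_of_real (- ln (1 - (norm (w $ j))\<^sup>2))" for j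
  proof -
    have "1 - cnj (w $ j) * w $ j = complex_of_real (1 - (norm (w $ j))\<^sup>2)"
      by (metis complex_norm_square mult.commute of_real_diff of_real_1)
    then show ?thesis using Ln_of_real[OF p[of j]] by simp
  qed
  have "tf (\<chi> j. cnj (w $ j)) w = (\<Sum>j\<in>UNIV. complex_of_real (- ln (1 - (norm (w $ j))\<^sup>2)))"
    unfolding tf_def by (simp only: vec_lambda_beta e)
  also have "\<dots> = complex_of_real (\<Sum>j\<in>UNIV. - ln (1 - (norm (w $ j))\<^sup>2))"
    by (rule of_real_sum[symmetric])
  finally have "tf (\<chi> j. cnj (w $ j)) w = complex_of_real (\<Sum>j\<in>UNIV. - ln (1 - (norm (w $ j))\<^sup>2))" .
  moreover have "(\<Sum>j\<in>UNIV. - ln (1 - (norm (w $ j))\<^sup>2)) \<ge> 0"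
  proof (rule sum_nonneg)
    fix j
    have "1 - (norm (w $ j))\<^sup>2 \<le> 1" by simp
    then have "ln (1 - (norm (w $ j))\<^sup>2) \<le> 0" using p[of j] by simp
    then show "0 \<le> - ln (1 - (norm (w $ j))\<^sup>2)" by simp
  qed
  ultimately show ?thesis by (simp only: norm_of_real)
qed

lemma cnj_polydisc: "w \<in> polydisc \<Longrightarrow> (\<chi> j. cnj (w $ j)) \<in> polydisc"
  by (simp add: polydisc_def)

lemma artanh_bound:
  fixes r :: real
  assumes "0 \<le> r" "r < 1"
  shows "artanh r \<le> ln 2 + (- ln (1 - r\<^sup>2)) / 2"
proof -
  have p: "1 - r\<^sup>2 > 0" "1 - r > 0" using assms by (auto simp: abs_square_less_1)
  have "(1 + r) / (1 - r) = (1 + r)\<^sup>2 / (1 - r\<^sup>2)" using p by (simp add: field_simps power2_eq_square)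
  also have "\<dots> \<le> 4 / (1 - r\<^sup>2)"
  proof -
    have "(1 + r)\<^sup>2 \<le> 2\<^sup>2" by (rule power_mono) (use assms in auto)
    then show ?thesis using p by (intro divide_right_mono) auto
  qed
  finally have "ln ((1 + r) / (1 - r)) \<le> ln (4 / (1 - r\<^sup>2))" using p assms by simp
  also have "\<dots> = 2 * ln 2 - ln (1 - r\<^sup>2)"
  proof -
    have l4: "ln (4::real) = 2 * ln 2" using ln_realpow[of 2 2] by simp
    show ?thesis using p by (simp add: ln_div l4)
  qed
  finally show ?thesis by (simp add: artanh_def)
qed



lemma theta_eq:
  "1/2 * mu z * norm (psi z) * (\<Sum>j\<in>UNIV. ln ((1 + norm (w $ j)) / (1 - norm (w $ j))))
   = mu z * norm (psi z) * (\<Sum>j\<in>UNIV. artanh (norm (w $ j)))"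
  by (simp add: artanh_def sum_divide_distrib[symmetric])

lemma bloch0star_sub: "bloch0star \<subseteq> bloch"
  by (auto simp: bloch0star_def)

lemma a_to_b:
  "bounded_op T bloch bloch_norm Y nY \<Longrightarrow> bounded_op T bloch0star bloch_norm Y nY"
  unfolding bounded_op_def using bloch0star_sub by blast

lemma weight_nonneg: "weight mu \<Longrightarrow> z \<in> polydisc \<Longrightarrow> 0 \<le> mu z"
  unfolding weight_def by (auto intro: less_imp_le)

lemma c_to_a:
  fixes mu :: "complex ^ 'n::finite \<Rightarrow> real"
    and psi :: "complex ^ 'n \<Rightarrow> complex"
    and phi :: "complex ^ 'n \<Rightarrow> complex ^ 'n"
  assumes wt: "weight mu" and hpsi: "holo_on psi polydisc" and phi: "holo_self_map phi"
    and psiH: "psi \<in> Hmu mu" and th: "bdd_above (theta_set mu psi phi)"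
  shows "bounded_op (wcomp psi phi) bloch bloch_norm (Hmu mu) (Hmu_norm mu)"
proof -
  obtain M where M: "\<And>z. z \<in> polydisc \<Longrightarrow> mu z * norm (psi z) \<le> M"
    using psiH unfolding Hmu_def bdd_above_def by auto
  obtain \<Theta> where T: "\<And>z. z \<in> polydisc \<Longrightarrow>
      1/2 * mu z * norm (psi z) * (\<Sum>j\<in>UNIV. ln ((1 + norm (phi z $ j)) / (1 - norm (phi z $ j)))) \<le> \<Theta>"
    using th unfolding theta_set_def bdd_above_def by auto
  define K where "K = \<bar>M\<bar> + \<bar>\<Theta>\<bar>"
  have key: "mu z * norm (wcomp psi phi f z) \<le> K * bloch_norm f" if f: "f \<in> bloch" and z: "z \<in> polydisc" for f z
  proof -
    define w where "w = phi z"
    have w: "w \<in> polydisc" using phi z unfolding holo_self_map_def w_def by blast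
    define a where "a = mu z * norm (psi z)"
    have a0: "0 \<le> a" unfolding a_def using weight_nonneg[OF wt z] by simp
    define n0 where "n0 = norm (f 0)"
    define \<beta> where "\<beta> = bloch_seminorm f"
    define S where "S = (\<Sum>k\<in>UNIV. artanh (norm (w $ k)))"
    have \<beta>0: "0 \<le> \<beta>" using bloch_seminorm_nonneg[OF f] by (simp add: \<beta>_def)
    have n00: "0 \<le> n0" by (simp add: n0_def)
    have g: "norm (f w) \<le> n0 + \<beta> * S"
      using growth[OF f w] norm_triangle_ineq2[of "f w" "f 0"] unfolding n0_def \<beta>_def S_def by linarith
    have e: "mu z * norm (wcomp psi phi f z) = a * norm (f w)"
      by (simp add: wcomp_def a_def w_def norm_mult)
    have "a * norm (f w) \<le> a * (n0 + \<beta> * S)" using g a0 by (rule mult_left_mono)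
    also have "\<dots> = a * n0 + \<beta> * (a * S)" by (simp add: algebra_simps)
    also have "\<dots> \<le> \<bar>M\<bar> * n0 + \<beta> * \<bar>\<Theta>\<bar>"
    proof -
      have "a * n0 \<le> \<bar>M\<bar> * n0"
        using M[OF z] n00 unfolding a_def by (intro mult_right_mono) auto
      moreover have "a * S \<le> \<bar>\<Theta>\<bar>"
        using T[OF z] theta_eq[of mu z psi w] unfolding a_def S_def w_def by auto
      then have "\<beta> * (a * S) \<le> \<beta> * \<bar>\<Theta>\<bar>" using \<beta>0 by (rule mult_left_mono)
      ultimately show ?thesis by linarith
    qed
    also have "\<dots> \<le> K * (n0 + \<beta>)"
    proof -
      have "0 \<le> \<bar>M\<bar> * \<beta>" "0 \<le> \<bar>\<Theta>\<bar> * n0" using \<beta>0 n00 by auto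
      moreover have "K * (n0 + \<beta>) = \<bar>M\<bar> * n0 + \<bar>M\<bar> * \<beta> + \<bar>\<Theta>\<bar> * n0 + \<bar>\<Theta>\<bar> * \<beta>"
        by (simp add: K_def algebra_simps)
      ultimately show ?thesis by (simp add: mult.commute)
    qed
    finally show ?thesis using e by (simp add: bloch_norm_def n0_def \<beta>_def)
  qed
  show ?thesis unfolding bounded_op_def
  proof (intro conjI ballI exI)
    fix f :: "complex^'n \<Rightarrow> complex" assume f: "f \<in> bloch"
    have hol: "holo_on (wcomp psi phi f) polydisc"
      unfolding wcomp_def
      by (rule holo_mult[OF hpsi holo_comp[OF phi]]) (use f in \<open>simp add: bloch_def\<close>)
    show "wcomp psi phi f \<in> Hmu mu"
      unfolding Hmu_def using hol key[OF f] by (auto intro!: bdd_aboveI2)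
    show "Hmu_norm mu (wcomp psi phi f) \<le> K * bloch_norm f"
      unfolding Hmu_norm_def by (rule cSUP_least) (use zero_polydisc key[OF f] in auto)
  qed
qed

lemma b_to_c:
  fixes mu :: "complex ^ 'n::finite \<Rightarrow> real"
    and psi :: "complex ^ 'n \<Rightarrow> complex"
    and phi :: "complex ^ 'n \<Rightarrow> complex ^ 'n"
  assumes wt: "weight mu" and hpsi: "holo_on psi polydisc" and phi: "holo_self_map phi"
    and bo: "bounded_op (wcomp psi phi) bloch0star bloch_norm (Hmu mu) (Hmu_norm mu)"
  shows "psi \<in> Hmu mu \<and> bdd_above (theta_set mu psi phi)"
proof -
  have mem: "\<And>f. f \<in> bloch0star \<Longrightarrow> wcomp psi phi f \<in> Hmu mu" using bo by (simp add: bounded_op_def)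
  obtain C where C: "\<And>f. f \<in> bloch0star \<Longrightarrow> Hmu_norm mu (wcomp psi phi f) \<le> C * bloch_norm f"
    using bo by (auto simp: bounded_op_def)
  have "wcomp psi phi (\<lambda>z. 1) = psi" by (simp add: wcomp_def)
  then have psiH: "psi \<in> Hmu mu" using mem[OF const_bloch0star[of 1]] by simp
  obtain M where M: "\<And>z. z \<in> polydisc \<Longrightarrow> mu z * norm (psi z) \<le> M"
    using psiH unfolding Hmu_def bdd_above_def by auto
  define n where "n = real CARD('n)"
  have thb: "1/2 * mu z * norm (psi z) * (\<Sum>j\<in>UNIV. ln ((1 + norm (phi z $ j)) / (1 - norm (phi z $ j))))
        \<le> M * (n * ln 2) + \<bar>C\<bar> * n" if z: "z \<in> polydisc" for z
  proof -
    define w where "w = phi z"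
    have w: "w \<in> polydisc" using phi z unfolding holo_self_map_def w_def by blast
    define a where "a = mu z * norm (psi z)"
    have a0: "0 \<le> a" unfolding a_def using weight_nonneg[OF wt z] by simp
    define c where "c = (\<chi> j. cnj (w $ j))"
    have c: "c \<in> polydisc" unfolding c_def by (rule cnj_polydisc[OF w])
    define f where "f = tf c"
    have f0: "f \<in> bloch0star" unfolding f_def by (rule tf_bloch0star[OF c])
    have fb: "f \<in> bloch" using f0 bloch0star_sub by blast
    define L where "L = (\<Sum>j\<in>UNIV. - ln (1 - (norm (w $ j))\<^sup>2))"
    have fw: "norm (f w) = L" unfolding f_def c_def L_def by (rule tf_value[OF w])
    have "mu z * norm (wcomp psi phi f z) \<le> Hmu_norm mu (wcomp psi phi f)"
      unfolding Hmu_norm_def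
      by (rule cSUP_upper) (use z mem[OF f0] in \<open>auto simp: Hmu_def\<close>)
    also have "\<dots> \<le> C * bloch_norm f" by (rule C[OF f0])
    also have "\<dots> \<le> \<bar>C\<bar> * (2 * n)"
    proof -
      have b0: "0 \<le> bloch_norm f" unfolding bloch_norm_def using bloch_seminorm_nonneg[OF fb] by simp
      have "C * bloch_norm f \<le> \<bar>C\<bar> * bloch_norm f" using b0 by (intro mult_right_mono) auto
      also have "\<dots> \<le> \<bar>C\<bar> * (2 * n)"
        using tf_bloch_norm[OF c] unfolding f_def n_def by (intro mult_left_mono) auto
      finally show ?thesis .
    qed
    finally have aL: "a * L \<le> \<bar>C\<bar> * (2 * n)"
      using fw by (simp add: wcomp_def a_def w_def norm_mult)
    have "1/2 * mu z * norm (psi z) * (\<Sum>j\<in>UNIV. ln ((1 + norm (phi z $ j)) / (1 - norm (phi z $ j))))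
          = a * (\<Sum>j\<in>UNIV. artanh (norm (w $ j)))"
      using theta_eq[of mu z psi w] by (simp add: a_def w_def)
    also have "\<dots> \<le> a * (\<Sum>j\<in>UNIV. ln 2 + (- ln (1 - (norm (w $ j))\<^sup>2)) / 2)"
      using a0 by (intro mult_left_mono sum_mono artanh_bound) (use pd_norm[OF w] in auto)
    also have "\<dots> = a * (n * ln 2) + (a * L) / 2"
    proof -
      have "(\<Sum>j\<in>UNIV. ln 2 + (- ln (1 - (norm (w $ j))\<^sup>2)) / 2) = n * ln 2 + L / 2"
        unfolding sum.distrib sum_divide_distrib[symmetric] by (simp add: L_def n_def)
      then show ?thesis by (simp add: algebra_simps)
    qed
    also have "\<dots> \<le> M * (n * ln 2) + \<bar>C\<bar> * n"
    proof -
      have "a * (n * ln 2) \<le> M * (n * ln 2)"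
        using M[OF z] unfolding a_def n_def by (intro mult_right_mono) auto
      then show ?thesis using aL by linarith
    qed
    finally show ?thesis .
  qed
  have "bdd_above (theta_set mu psi phi)"
    unfolding theta_set_def by (rule bdd_aboveI2) (rule thb)
  with psiH show ?thesis by simp
qed

theorem theorem5p1:
  fixes mu :: "complex ^ 'n::finite \<Rightarrow> real"
    and psi :: "complex ^ 'n \<Rightarrow> complex"
    and phi :: "complex ^ 'n \<Rightarrow> complex ^ 'n"
  assumes "weight mu"
    and "holo_on psi polydisc"
    and "holo_self_map phi"
  shows "(bounded_op (wcomp psi phi) bloch bloch_norm (Hmu mu) (Hmu_norm mu)
            \<longleftrightarrow> bounded_op (wcomp psi phi) bloch0star bloch_norm (Hmu mu) (Hmu_norm mu))
       \<and> (bounded_op (wcomp psi phi) bloch0star bloch_norm (Hmu mu) (Hmu_norm mu)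
            \<longleftrightarrow> (psi \<in> Hmu mu \<and> bdd_above (theta_set mu psi phi)))"
proof (rule conjI; rule iffI)
  assume "bounded_op (wcomp psi phi) bloch bloch_norm (Hmu mu) (Hmu_norm mu)"
  then show "bounded_op (wcomp psi phi) bloch0star bloch_norm (Hmu mu) (Hmu_norm mu)"
    by (rule a_to_b)
next
  assume "bounded_op (wcomp psi phi) bloch0star bloch_norm (Hmu mu) (Hmu_norm mu)"
  then have "psi \<in> Hmu mu \<and> bdd_above (theta_set mu psi phi)" by (rule b_to_c[OF assms])
  then show "bounded_op (wcomp psi phi) bloch bloch_norm (Hmu mu) (Hmu_norm mu)"
    using c_to_a[OF assms] by blast
next
  assume "bounded_op (wcomp psi phi) bloch0star bloch_norm (Hmu mu) (Hmu_norm mu)"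
  then show "psi \<in> Hmu mu \<and> bdd_above (theta_set mu psi phi)" by (rule b_to_c[OF assms])
next
  assume "psi \<in> Hmu mu \<and> bdd_above (theta_set mu psi phi)"
  then have "bounded_op (wcomp psi phi) bloch bloch_norm (Hmu mu) (Hmu_norm mu)"
    using c_to_a[OF assms] by blast
  then show "bounded_op (wcomp psi phi) bloch0star bloch_norm (Hmu mu) (Hmu_norm mu)"
    by (rule a_to_b)
qed


end
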